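(* Let $\mathcal{Y}=\{1,\dots,m\}$ be a finite set of classes and $\Delta(\mathcal{Y})$ the set of probability vectors on $\mathcal{Y}$. Let $u:\mathcal{Y}\times\mathcal{Y}\to\mathbb{R}_+$ be nonnegative and nondegenerate (for every $y$ there is $a$ with $u(a,y)>0$), and define $p^u:\Delta(\mathcal{Y})\to\Delta(\mathcal{Y})$ by $p^u_y(q)=\bar u(y,q)/\sum_{y'\in\mathcal{Y}}\bar u(y',q)$, where $\bar u(y,q)=\sum_{y'}u(y,y')q_{y'}$. Then the level sets of $p^u$ are convex: for any $q,q'\in\Delta(\mathcal{Y})$ and $\alpha\in[0,1]$, if $p^u(q)=p^u(q')=p$ then $p^u(\alpha q+(1-\alpha)q')=p$. *)

theory Defs
  imports Complex_Main
begin

definition prob_simplex :: "('y::finite \<Rightarrow> real) set" where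
  "prob_simplex = {q. (\<forall>y. 0 \<le> q y) \<and> (\<Sum>y\<in>UNIV. q y) = 1}"

definition ubar :: "('y::finite \<Rightarrow> 'y \<Rightarrow> real) \<Rightarrow> 'y \<Rightarrow> ('y \<Rightarrow> real) \<Rightarrow> real" where
  "ubar u y q = (\<Sum>y'\<in>UNIV. u y y' * q y')"

definition pu :: "('y::finite \<Rightarrow> 'y \<Rightarrow> real) \<Rightarrow> ('y \<Rightarrow> real) \<Rightarrow> ('y \<Rightarrow> real)" where
  "pu u q = (\<lambda>y. ubar u y q / (\<Sum>y'\<in>UNIV. ubar u y' q))"

end

theory Submission
  imports Defs
begin

lemma S_pos:
  fixes u :: "'y::finite \<Rightarrow> 'y \<Rightarrow> real"
  assumes nonneg: "\<And>a y. 0 \<le> u a y"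
    and nondeg: "\<And>y. \<exists>a. 0 < u a y"
    and q: "q \<in> prob_simplex"
  shows "0 < (\<Sum>y\<in>UNIV. ubar u y q)"
proof -
  have q0: "\<And>y. 0 \<le> q y" and q1: "(\<Sum>y\<in>UNIV. q y) = 1" using q by (auto simp: prob_simplex_def)
  have "\<exists>y'. q y' > 0"
  proof (rule ccontr)
    assume "\<not> (\<exists>y'. q y' > 0)"
    then have "\<And>y. q y = 0" using q0 by (simp add: not_less order.antisym)
    then show False using q1 by simp
  qed
  then obtain y' where y': "q y' > 0" by blast
  obtain a where a: "u a y' > 0" using nondeg by blast
  have nn: "\<And>y z. 0 \<le> u y z * q z" using nonneg q0 by simp
  have "0 < u a y' * q y'" using a y' by simp
  also have "\<dots> \<le> ubar u a q" unfolding ubar_def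
    by (rule member_le_sum) (auto simp: nn)
  also have "\<dots> \<le> (\<Sum>y\<in>UNIV. ubar u y q)"
    by (rule member_le_sum) (auto simp: ubar_def nn intro: sum_nonneg)
  finally show ?thesis .
qed

theorem lemma1:
  fixes u :: "'y::finite \<Rightarrow> 'y \<Rightarrow> real"
    and q q' p :: "'y \<Rightarrow> real" and \<alpha> :: real
  assumes nonneg: "\<And>a y. 0 \<le> u a y"
    and nondeg: "\<And>y. \<exists>a. 0 < u a y"
    and q: "q \<in> prob_simplex" and q': "q' \<in> prob_simplex"
    and \<alpha>: "0 \<le> \<alpha>" "\<alpha> \<le> 1"
    and eq: "pu u q = p" "pu u q' = p"
  shows "pu u (\<lambda>y. \<alpha> * q y + (1 - \<alpha>) * q' y) = p"
proof -
  define S where "S r = (\<Sum>y\<in>UNIV. ubar u y r)" for r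
  have Sq: "S q > 0" using S_pos[OF nonneg nondeg q] by (simp add: S_def)
  have Sq': "S q' > 0" using S_pos[OF nonneg nondeg q'] by (simp add: S_def)
  have lin: "ubar u y (\<lambda>y. \<alpha> * q y + (1 - \<alpha>) * q' y) = \<alpha> * ubar u y q + (1 - \<alpha>) * ubar u y q'" for y
  proof -
    have "(\<Sum>y'\<in>UNIV. u y y' * (\<alpha> * q y' + (1 - \<alpha>) * q' y'))
       = (\<Sum>y'\<in>UNIV. \<alpha> * (u y y' * q y') + (1 - \<alpha>) * (u y y' * q' y'))"
      by (rule sum.cong) (simp_all add: algebra_simps)
    then show ?thesis unfolding ubar_def by (simp add: sum.distrib sum_distrib_left)
  qed
  have h1: "ubar u y q = p y * S q" for y
  proof -
    have "p y = ubar u y q / S q" using eq(1) unfolding pu_def S_def by auto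
    then show ?thesis using Sq by simp
  qed
  have h2: "ubar u y q' = p y * S q'" for y
  proof -
    have "p y = ubar u y q' / S q'" using eq(2) unfolding pu_def S_def by auto
    then show ?thesis using Sq' by simp
  qed
  have p1: "(\<Sum>y\<in>UNIV. p y) = 1"
  proof -
    have "S q = (\<Sum>y\<in>UNIV. ubar u y q)" by (simp add: S_def)
    also have "\<dots> = (\<Sum>y\<in>UNIV. p y * S q)" by (simp only: h1)
    also have "\<dots> = (\<Sum>y\<in>UNIV. p y) * S q" by (simp add: sum_distrib_right)
    finally have "S q = (\<Sum>y\<in>UNIV. p y) * S q" .
    then show ?thesis using Sq by simp
  qed
  define T where "T = \<alpha> * S q + (1 - \<alpha>) * S q'"
  have T: "T > 0" unfolding T_def using Sq Sq' \<alpha>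
    by (smt (verit) mult_nonneg_nonneg mult_pos_pos)
  have r: "ubar u y (\<lambda>y. \<alpha> * q y + (1 - \<alpha>) * q' y) = p y * T" for y
    unfolding lin h1 h2 T_def by (simp add: algebra_simps)
  have "(\<Sum>y\<in>UNIV. ubar u y (\<lambda>y. \<alpha> * q y + (1 - \<alpha>) * q' y)) = T"
    unfolding r by (simp add: sum_distrib_right[symmetric] p1)
  then show ?thesis using T by (simp add: pu_def fun_eq_iff r)
qed

end
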